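(* Let $S_2$ be a closed orientable surface of genus two and let $(\alpha,\beta)$ be a minimally intersecting filling pair on $S_2$, so that $S_2\setminus(\alpha\cup\beta)$ consists of exactly two disks $D_1,D_2$. Then $\{|D_1|,|D_2|\}$ is either $\{4,12\}$ or $\{8,8\}$. Equivalently, there is no minimally intersecting filling pair of type $\{6,10\}$ on $S_2$.
   Context: A filling pair on a closed orientable surface $S_g$ is a pair $(\alpha,\beta)$ of homotopically distinct simple closed curves in minimal position such that $S_g\setminus(\alpha\cup\beta)$ is a disjoint union of topological disks. It is minimally intersecting (minimal) if the geometric intersection number $i(\alpha,\beta)$ (equivalently, the number of complementary disks) is minimal among all filling pairs of $S_g$; for $g=2$ a minimal filling pair has $i(\alpha,\beta)=4$ and exactly two complementary disks. For a complementary disk $D$, $|D|$ denotes its number of sides, i.e. the number of arcs of $\alpha$ and of $\beta$ (between consecutive intersection points) on its boundary; the two numbers sum to $16$. A minimal filling pair on $S_2$ is said to be of type $\{a,b\}$ if its two complementary disks have $a$ and $b$ sides. *)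

theory Defs
  imports Main "HOL-Library.Multiset"
begin

text \<open>
Combinatorial (fat-graph) model of a pair of transverse simple closed curves
alpha, beta on a closed oriented surface meeting in n points.

Intersection points are labelled 0,...,n-1 in the order in which alpha
(oriented) passes through them.  beta (oriented) passes through them in the
order pi 0, pi 1, ..., pi (n-1), where pi is a bijection of {0..<n}.
At the point v, beta crosses alpha from right to left (w.r.t. the orientation
of the surface) iff sg v holds.

Half-edges: pairs (v, d) with v < n and d < 4, where around v in
counterclockwise order
  d = 0 : outgoing alpha half-edge ("east"),
  d = 1 : "north",
  d = 2 : incoming alpha half-edge ("west"),
  d = 3 : "south";
the outgoing beta half-edge at v is north if sg v, south otherwise.
\<close>

definition half_edges :: "nat \<Rightarrow> (nat \<times> nat) set" where
  "half_edges n = {0..<n} \<times> {0..<4}"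

definition beta_out :: "(nat \<Rightarrow> bool) \<Rightarrow> nat \<Rightarrow> nat" where
  "beta_out sg v = (if sg v then 1 else 3)"

definition beta_in :: "(nat \<Rightarrow> bool) \<Rightarrow> nat \<Rightarrow> nat" where
  "beta_in sg v = (if sg v then 3 else 1)"

definition edge_inv ::
  "nat \<Rightarrow> (nat \<Rightarrow> nat) \<Rightarrow> (nat \<Rightarrow> bool) \<Rightarrow> nat \<times> nat \<Rightarrow> nat \<times> nat" where
  "edge_inv n pi sg h =
     (let v = fst h; d = snd h; j = inv_into {0..<n} pi v in
      if d = 0 then (Suc v mod n, 2)
      else if d = 2 then ((v + n - 1) mod n, 0)
      else if d = beta_out sg v then
        (let w = pi (Suc j mod n) in (w, beta_in sg w))
      else
        (let w = pi ((j + n - 1) mod n) in (w, beta_out sg w)))"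

definition rot :: "nat \<times> nat \<Rightarrow> nat \<times> nat" where
  "rot h = (fst h, Suc (snd h) mod 4)"

text \<open>Face permutation: follow an edge, then turn at the vertex.  Its cycles are
the boundary walks of the complementary regions; each step crosses one side.\<close>
definition face_perm ::
  "nat \<Rightarrow> (nat \<Rightarrow> nat) \<Rightarrow> (nat \<Rightarrow> bool) \<Rightarrow> nat \<times> nat \<Rightarrow> nat \<times> nat" where
  "face_perm n pi sg = rot \<circ> edge_inv n pi sg"

definition face_of ::
  "nat \<Rightarrow> (nat \<Rightarrow> nat) \<Rightarrow> (nat \<Rightarrow> bool) \<Rightarrow> nat \<times> nat \<Rightarrow> (nat \<times> nat) set" where
  "face_of n pi sg h = {(face_perm n pi sg ^^ k) h | k. True}"

text \<open>The complementary regions (disks); the number of sides of a region is the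
cardinality of its face cycle.\<close>
definition faces :: "nat \<Rightarrow> (nat \<Rightarrow> nat) \<Rightarrow> (nat \<Rightarrow> bool) \<Rightarrow> (nat \<times> nat) set set" where
  "faces n pi sg = face_of n pi sg ` half_edges n"

definition face_sizes :: "nat \<Rightarrow> (nat \<Rightarrow> nat) \<Rightarrow> (nat \<Rightarrow> bool) \<Rightarrow> nat multiset" where
  "face_sizes n pi sg = image_mset card (mset_set (faces n pi sg))"

text \<open>A filling pair with i(alpha,beta) = n on the closed orientable surface of
genus g: the surface obtained by capping the faces of the fat graph alpha \<union> beta
with disks has Euler characteristic n - 2n + #faces = 2 - 2g, and the curves are
in minimal position, i.e. (bigon criterion) no complementary disk is a bigon.\<close>
definition filling_pair :: "nat \<Rightarrow> nat \<Rightarrow> (nat \<Rightarrow> nat) \<Rightarrow> (nat \<Rightarrow> bool) \<Rightarrow> bool" where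
  "filling_pair g n pi sg \<longleftrightarrow>
     n \<ge> 1 \<and> bij_betw pi {0..<n} {0..<n} \<and>
     int n - 2 * int n + int (card (faces n pi sg)) = 2 - 2 * int g \<and>
     (\<forall>F \<in> faces n pi sg. card F \<noteq> 2)"

definition minimal_filling_pair :: "nat \<Rightarrow> nat \<Rightarrow> (nat \<Rightarrow> nat) \<Rightarrow> (nat \<Rightarrow> bool) \<Rightarrow> bool" where
  "minimal_filling_pair g n pi sg \<longleftrightarrow>
     filling_pair g n pi sg \<and> (\<forall>m pi' sg'. filling_pair g m pi' sg' \<longrightarrow> n \<le> m)"

end

theory Submission
  imports Defs "HOL-Library.Product_Lexorder"
begin

definition inv_c :: "nat list \<Rightarrow> nat \<Rightarrow> nat" where
  "inv_c ps v = (case filter (\<lambda>j. ps ! j = v) [0..<length ps] of [] \<Rightarrow> 0 | j # _ \<Rightarrow> j)"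

definition edge_c :: "nat \<Rightarrow> nat list \<Rightarrow> bool list \<Rightarrow> nat \<times> nat \<Rightarrow> nat \<times> nat" where
  "edge_c n ps ss h =
     (let v = fst h; d = snd h; j = inv_c ps v in
      if d = 0 then (Suc v mod n, 2)
      else if d = 2 then ((v + n - 1) mod n, 0)
      else if d = (if ss ! v then 1 else 3) then
        (let w = ps ! (Suc j mod n) in (w, if ss ! w then 3 else 1))
      else
        (let w = ps ! ((j + n - 1) mod n) in (w, if ss ! w then 1 else 3)))"

definition fp_c :: "nat \<Rightarrow> nat list \<Rightarrow> bool list \<Rightarrow> nat \<times> nat \<Rightarrow> nat \<times> nat" where
  "fp_c n ps ss = rot \<circ> edge_c n ps ss"

fun orb :: "nat \<Rightarrow> ('a \<Rightarrow> 'a) \<Rightarrow> 'a \<Rightarrow> 'a \<Rightarrow> 'a list option" where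
  "orb 0 f h0 x = None"
| "orb (Suc m) f h0 x = (if f x = h0 then Some [x] else
     (case orb m f h0 (f x) of None \<Rightarrow> None | Some xs \<Rightarrow> Some (x # xs)))"

definition srt_c :: "('a::linorder) list \<Rightarrow> 'a list" where
  "srt_c xs = sort (remdups xs)"

definition hes :: "nat \<Rightarrow> (nat \<times> nat) list" where
  "hes n = List.product [0..<n] [0..<4]"

definition orbs :: "nat \<Rightarrow> nat list \<Rightarrow> bool list \<Rightarrow> (nat \<times> nat) list option list" where
  "orbs n ps ss = map (\<lambda>h. orb (4*n) (fp_c n ps ss) h h) (hes n)"

definition good2 :: "nat \<Rightarrow> (nat \<times> nat) list list \<Rightarrow> bool" where
  "good2 n L = ((int n - 2 * int n + int (length L) = -2 \<and> (\<forall>F\<in>set L. length F \<noteq> 2))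
      \<longrightarrow> n = 4 \<and> sort (map length L) \<in> {[4,12],[8,8]})"

definition good1 :: "nat \<Rightarrow> (nat \<times> nat) list option list \<Rightarrow> bool" where
  "good1 n os = ((\<forall>x\<in>set os. x \<noteq> None) \<and> good2 n (remdups (map (\<lambda>x. srt_c (the x)) os)))"

definition good_c :: "nat \<Rightarrow> nat list \<Rightarrow> bool list \<Rightarrow> bool" where
  "good_c n ps ss = good1 n (orbs n ps ss)"

definition all_good :: "nat \<Rightarrow> bool" where
  "all_good n = (\<forall>ps\<in>set (filter distinct (List.n_lists n [0..<n])).
      \<forall>ss\<in>set (List.n_lists n [True,False]). good_c n ps ss)"


lemma orb_spec:
  "orb m f h0 x = Some xs \<Longrightarrow> xs \<noteq> [] \<and> xs = map (\<lambda>k. (f ^^ k) x) [0..<length xs] \<and> (f ^^ length xs) x = h0"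
proof (induction m arbitrary: x xs)
  case 0
  then show ?case by simp
next
  case (Suc m)
  show ?case
  proof (cases "f x = h0")
    case True
    then show ?thesis using Suc.prems by auto
  next
    case False
    then obtain ys where ys: "orb m f h0 (f x) = Some ys" and xs: "xs = x # ys"
      using Suc.prems by (auto split: option.splits)
    from Suc.IH[OF ys] have ih: "ys = map (\<lambda>k. (f ^^ k) (f x)) [0..<length ys]"
      "(f ^^ length ys) (f x) = h0" by auto
    have "map (\<lambda>k. (f ^^ k) x) [0..<length xs] = x # map (\<lambda>k. (f ^^ Suc k) x) [0..<length ys]"
      unfolding xs by (simp add: map_upt_Suc del: upt_Suc)
    also have "map (\<lambda>k. (f ^^ Suc k) x) [0..<length ys] = ys"
      by (subst ih(1)) (simp add: funpow_Suc_right del: funpow.simps)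
    finally show ?thesis using xs ih(2) by (simp add: funpow_Suc_right del: funpow.simps)
  qed
qed

lemma orb_mem: "orb N f h h = Some xs \<Longrightarrow> h \<in> set xs"
proof -
  assume a: "orb N f h h = Some xs"
  have sp: "xs \<noteq> []" "xs = map (\<lambda>k. (f ^^ k) h) [0..<length xs]" using orb_spec[OF a] by auto
  have "xs ! 0 = h" by (subst sp(2)) (simp add: sp(1))
  then show ?thesis using sp(1) by (metis length_greater_0_conv nth_mem)
qed

lemma funpow_period: "(f ^^ m) h = h \<Longrightarrow> ((f ^^ m) ^^ q) h = h"
  by (induction q) auto

lemma orbit_set:
  assumes "0 < m" "(f ^^ m) h = h"
  shows "{(f ^^ k) h | k. True} = (\<lambda>k. (f ^^ k) h) ` {0..<m}"
proof
  show "{(f ^^ k) h | k. True} \<subseteq> (\<lambda>k. (f ^^ k) h) ` {0..<m}"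
  proof
    fix y assume "y \<in> {(f ^^ k) h | k. True}"
    then obtain k where y: "y = (f ^^ k) h" by auto
    have "k = k mod m + m * (k div m)" by simp
    then have "(f ^^ k) h = (f ^^ (k mod m)) (((f ^^ m) ^^ (k div m)) h)"
      by (metis funpow_add funpow_mult comp_apply)
    also have "\<dots> = (f ^^ (k mod m)) h" using funpow_period[OF assms(2)] by simp
    finally show "y \<in> (\<lambda>k. (f ^^ k) h) ` {0..<m}" using y assms(1) by auto
  qed
qed auto

lemma filter_upt_single:
  assumes "j < m" "\<And>i. i < m \<Longrightarrow> P i \<longleftrightarrow> i = j"
  shows "filter P [0..<m] = [j]"
proof -
  have "[0..<m] = [0..<j] @ j # [Suc j..<m]" using assms(1)
    by (metis le0 upt_add_eq_append upt_conv_Cons add_0 le_add_diff_inverse less_imp_le)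
  moreover have "filter P [0..<j] = []" using assms by (auto simp: filter_empty_conv)
  moreover have "filter P [Suc j..<m] = []" using assms by (auto simp: filter_empty_conv)
  ultimately show ?thesis using assms by simp
qed

lemma inv_c_nth:
  assumes "distinct ps" "j < length ps"
  shows "inv_c ps (ps ! j) = j"
proof -
  have "filter (\<lambda>i. ps ! i = ps ! j) [0..<length ps] = [j]"
    using assms by (intro filter_upt_single) (auto simp: nth_eq_iff_index_eq)
  then show ?thesis unfolding inv_c_def by simp
qed

lemma link_step:
  assumes bij: "bij_betw pi {0..<n} {0..<n}"
    and ps: "ps = map pi [0..<n]" and ss: "ss = map sg [0..<n]"
    and h: "h \<in> half_edges n"
  shows "face_perm n pi sg h = fp_c n ps ss h \<and> face_perm n pi sg h \<in> half_edges n"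
proof -
  obtain v d where hv: "h = (v, d)" "v < n" "d < 4" using h by (cases h) (auto simp: half_edges_def)
  have n: "0 < n" using hv by simp
  have pin: "\<And>i. i < n \<Longrightarrow> pi i < n" using bij by (auto simp: bij_betw_def)
  have dist: "distinct ps" using bij ps by (simp add: bij_betw_def distinct_map)
  define j where "j = inv_into {0..<n} pi v"
  have vi: "v \<in> pi ` {0..<n}" using bij hv by (auto simp: bij_betw_def)
  have j: "j < n" "pi j = v" unfolding j_def
    using inv_into_into[OF vi] f_inv_into_f[OF vi] by auto
  have "inv_c ps v = j" using inv_c_nth[OF dist, of j] j ps by simp
  moreover have psi: "\<And>i. i < n \<Longrightarrow> ps ! i = pi i" using ps by simp
  moreover have ssi: "\<And>i. i < n \<Longrightarrow> ss ! i = sg i" using ss by simp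
  moreover have "Suc j mod n < n" "(j + n - 1) mod n < n" using n by auto
  ultimately show ?thesis using hv n j pin
    unfolding face_perm_def fp_c_def edge_inv_def edge_c_def rot_def half_edges_def beta_out_def beta_in_def
    by (auto simp: Let_def j_def[symmetric])
qed

lemma link_pow:
  assumes bij: "bij_betw pi {0..<n} {0..<n}"
    and ps: "ps = map pi [0..<n]" and ss: "ss = map sg [0..<n]"
    and h: "h \<in> half_edges n"
  shows "(face_perm n pi sg ^^ k) h = (fp_c n ps ss ^^ k) h \<and> (face_perm n pi sg ^^ k) h \<in> half_edges n"
proof (induction k)
  case 0
  then show ?case using h by simp
next
  case (Suc k)
  then show ?case using link_step[OF bij ps ss, of "(fp_c n ps ss ^^ k) h"] by auto
qed

lemma set_srt_c: "set (srt_c xs) = set xs" "distinct (srt_c xs)" "sorted (srt_c xs)"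
  by (auto simp: srt_c_def)

lemma link_faces:
  assumes bij: "bij_betw pi {0..<n} {0..<n}"
    and ps: "ps = map pi [0..<n]" and ss: "ss = map sg [0..<n]"
    and ok: "\<forall>x\<in>set (orbs n ps ss). x \<noteq> None"
  defines "L \<equiv> remdups (map (\<lambda>x. srt_c (the x)) (orbs n ps ss))"
  shows "faces n pi sg = set (map set L)" "card (faces n pi sg) = length L"
    "face_sizes n pi sg = mset (map length L)"
proof -
  have fo: "face_of n pi sg h = set (srt_c (the (orb (4*n) (fp_c n ps ss) h h)))"
    if h: "h \<in> half_edges n" for h
  proof -
    have "h \<in> set (hes n)" using h by (simp add: hes_def half_edges_def)
    then obtain xs where xs: "orb (4*n) (fp_c n ps ss) h h = Some xs"
      using ok unfolding orbs_def by fastforce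
    note sp = orb_spec[OF xs]
    have "face_of n pi sg h = {(fp_c n ps ss ^^ k) h | k. True}"
      unfolding face_of_def using link_pow[OF bij ps ss h] by simp
    also have "\<dots> = (\<lambda>k. (fp_c n ps ss ^^ k) h) ` {0..<length xs}"
      using sp by (intro orbit_set) auto
    also have "\<dots> = set xs" by (subst (2) sp[THEN conjunct2, THEN conjunct1]) simp
    finally show ?thesis using xs by (simp add: set_srt_c)
  qed
  have hs: "half_edges n = set (hes n)" by (simp add: hes_def half_edges_def)
  show f1: "faces n pi sg = set (map set L)"
    unfolding faces_def L_def orbs_def using fo by (auto simp: hs)
  have inj: "inj_on set (set L)"
    unfolding L_def by (rule inj_onI) (auto intro: sorted_distinct_set_unique simp: set_srt_c)
  have dL: "distinct (map set L)" using inj by (simp add: L_def distinct_map)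
  show "card (faces n pi sg) = length L" using f1 dL by (metis distinct_card length_map)
  have dF: "\<And>F. F \<in> set L \<Longrightarrow> distinct F" unfolding L_def by (auto simp: set_srt_c)
  have "face_sizes n pi sg = image_mset card (mset (map set L))"
    unfolding face_sizes_def f1 using mset_set_set[OF dL] by simp
  also have "\<dots> = mset (map (card \<circ> set) L)" by (simp add: image_mset.compositionality)
  also have "map (card \<circ> set) L = map length L" using dF
    by (metis (mono_tags) comp_apply distinct_card map_eq_conv)
  finally show "face_sizes n pi sg = mset (map length L)" .
qed


fun collect :: "nat \<Rightarrow> ('a::linorder \<Rightarrow> 'a) \<Rightarrow> 'a list \<Rightarrow> 'a list list \<Rightarrow> 'a list list option" where
  "collect N f [] acc = Some acc"
| "collect N f (h # hs) acc = (if (\<exists>F\<in>set acc. h \<in> set F) then collect N f hs acc else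
     (case orb N f h h of None \<Rightarrow> None | Some xs \<Rightarrow> collect N f hs (srt_c xs # acc)))"

definition goodc :: "nat \<Rightarrow> nat list \<Rightarrow> bool list \<Rightarrow> bool" where
  "goodc n ps ss = (case collect (4*n) (fp_c n ps ss) (hes n) [] of None \<Rightarrow> False | Some L \<Rightarrow> good2 n L)"


lemma collect_spec:
  "collect N f hs acc = Some L \<Longrightarrow>
    (\<forall>F\<in>set L. F \<in> set acc \<or> (\<exists>h\<in>set hs. \<exists>xs. orb N f h h = Some xs \<and> F = srt_c xs)) \<and>
    (\<forall>h\<in>set hs. \<exists>F\<in>set L. h \<in> set F) \<and> set acc \<subseteq> set L \<and>
    (distinct (map set acc) \<longrightarrow> distinct (map set L))"
proof (induction hs arbitrary: acc)
  case Nil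
  then show ?case by simp
next
  case (Cons h hs)
  show ?case
  proof (cases "\<exists>F\<in>set acc. h \<in> set F")
    case True
    then have c: "collect N f hs acc = Some L" using Cons.prems by simp
    from Cons.IH[OF c] True show ?thesis by auto
  next
    case False
    then obtain xs where xs: "orb N f h h = Some xs" and c: "collect N f hs (srt_c xs # acc) = Some L"
      using Cons.prems by (auto split: option.splits)
    have hx: "h \<in> set (srt_c xs)" using orb_mem[OF xs] by (simp add: set_srt_c)
    have "set (srt_c xs) \<notin> set ` set acc" using False hx by auto
    with Cons.IH[OF c] hx xs show ?thesis by auto
  qed
qed

lemma orbit_shift:
  assumes "0 < m" "(f ^^ m) h0 = h0"
  shows "{(f ^^ j) ((f ^^ k) h0) | j. True} = {(f ^^ j) h0 | j. True}"
proof
  show "{(f ^^ j) ((f ^^ k) h0) | j. True} \<subseteq> {(f ^^ j) h0 | j. True}"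
    by (auto simp flip: funpow_add comp_apply[of "f ^^ _" "f ^^ _"])
next
  show "{(f ^^ j) h0 | j. True} \<subseteq> {(f ^^ j) ((f ^^ k) h0) | j. True}"
  proof
    fix y assume "y \<in> {(f ^^ j) h0 | j. True}"
    then obtain j where y: "y = (f ^^ j) h0" by auto
    have mk: "k \<le> m * k" using assms(1) by simp
    have "(f ^^ (j + m * k - k)) ((f ^^ k) h0) = (f ^^ (j + m * k)) h0"
      using mk by (metis comp_apply funpow_add le_add2 le_add_diff_inverse2 le_trans)
    also have "\<dots> = (f ^^ j) (((f ^^ m) ^^ k) h0)" by (simp add: funpow_add funpow_mult)
    also have "\<dots> = y" using funpow_period[OF assms(2)] y by simp
    finally show "y \<in> {(f ^^ j) ((f ^^ k) h0) | j. True}" by (metis (mono_tags, lifting) mem_Collect_eq)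
  qed
qed

lemma orb_orbit:
  assumes "orb N f h0 h0 = Some xs" "h \<in> set xs"
  shows "{(f ^^ j) h | j. True} = set xs"
proof -
  note sp = orb_spec[OF assms(1)]
  have per: "0 < length xs" "(f ^^ length xs) h0 = h0" using sp by auto
  obtain k where k: "h = (f ^^ k) h0" using assms(2) by (subst (asm) sp[THEN conjunct2, THEN conjunct1]) auto
  have "{(f ^^ j) h | j. True} = {(f ^^ j) h0 | j. True}" unfolding k by (rule orbit_shift[OF per])
  also have "\<dots> = (\<lambda>k. (f ^^ k) h0) ` {0..<length xs}" by (rule orbit_set[OF per])
  also have "\<dots> = set xs" by (subst (2) sp[THEN conjunct2, THEN conjunct1]) simp
  finally show ?thesis .
qed

lemma link_faces2:
  assumes bij: "bij_betw pi {0..<n} {0..<n}"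
    and ps: "ps = map pi [0..<n]" and ss: "ss = map sg [0..<n]"
    and col: "collect (4*n) (fp_c n ps ss) (hes n) [] = Some L"
  shows "faces n pi sg = set (map set L)" "card (faces n pi sg) = length L"
    "face_sizes n pi sg = mset (map length L)"
proof -
  let ?f = "fp_c n ps ss"
  note cs = collect_spec[OF col]
  have hs: "half_edges n = set (hes n)" by (simp add: hes_def half_edges_def)
  have fo: "face_of n pi sg h = {(?f ^^ k) h | k. True}" if "h \<in> half_edges n" for h
    unfolding face_of_def using link_pow[OF bij ps ss that] by simp
  have fL: "\<And>F. F \<in> set L \<Longrightarrow> \<exists>h\<in>set (hes n). \<exists>xs. orb (4*n) ?f h h = Some xs \<and> F = srt_c xs"
    using cs by auto
  show f1: "faces n pi sg = set (map set L)"
  proof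
    show "faces n pi sg \<subseteq> set (map set L)"
    proof
      fix X assume "X \<in> faces n pi sg"
      then obtain h where h: "h \<in> half_edges n" and X: "X = face_of n pi sg h"
        unfolding faces_def by auto
      obtain F where F: "F \<in> set L" "h \<in> set F" using cs h hs by auto
      obtain h0 xs where xs: "orb (4*n) ?f h0 h0 = Some xs" "F = srt_c xs" using fL[OF F(1)] by auto
      have "X = set xs" using X fo[OF h] orb_orbit[OF xs(1)] F(2) xs(2) by (simp add: set_srt_c)
      moreover have "set (srt_c xs) \<in> set (map set L)" using F xs(2) by auto
      ultimately show "X \<in> set (map set L)" by (simp add: set_srt_c)
    qed
  next
    show "set (map set L) \<subseteq> faces n pi sg"
    proof
      fix X assume "X \<in> set (map set L)"
      then obtain F where F: "F \<in> set L" "X = set F" by auto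
      obtain h0 xs where xs: "h0 \<in> set (hes n)" "orb (4*n) ?f h0 h0 = Some xs" "F = srt_c xs"
        using fL[OF F(1)] by auto
      have h0x: "h0 \<in> set xs" using orb_mem[OF xs(2)] .
      have "X = face_of n pi sg h0" using fo[of h0] xs hs orb_orbit[OF xs(2) h0x] F(2)
        by (simp add: set_srt_c)
      then show "X \<in> faces n pi sg" using xs(1) hs unfolding faces_def by auto
    qed
  qed
  have dL: "distinct (map set L)" using cs by simp
  show "card (faces n pi sg) = length L" using f1 dL by (metis distinct_card length_map)
  have dF: "\<And>F. F \<in> set L \<Longrightarrow> distinct F" by (metis fL set_srt_c(2))
  have "face_sizes n pi sg = image_mset card (mset (map set L))"
    unfolding face_sizes_def f1 using mset_set_set[OF dL] by simp
  also have "\<dots> = mset (map (card \<circ> set) L)" by (simp add: image_mset.compositionality)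
  also have "map (card \<circ> set) L = map length L" using dF
    by (metis (mono_tags) comp_apply distinct_card map_eq_conv)
  finally show "face_sizes n pi sg = mset (map length L)" .
qed


definition allg :: "nat \<Rightarrow> bool" where
  "allg n = (\<forall>ps\<in>set (filter distinct (List.n_lists n [0..<n])).
      \<forall>ss\<in>set (List.n_lists n [True,False]). goodc n ps ss)"

lemma ag1: "allg 1" by code_simp
lemma ag2: "allg 2" by code_simp
lemma ag3: "allg 3" by code_simp
lemma perms4: "set (filter distinct (List.n_lists 4 [0..<4::nat])) = set [[0,1,2,3], [0,1,3,2], [0,2,1,3], [0,2,3,1], [0,3,1,2], [0,3,2,1], [1,0,2,3], [1,0,3,2], [1,2,0,3], [1,2,3,0], [1,3,0,2], [1,3,2,0], [2,0,1,3], [2,0,3,1], [2,1,0,3], [2,1,3,0], [2,3,0,1], [2,3,1,0], [3,0,1,2], [3,0,2,1], [3,1,0,2], [3,1,2,0], [3,2,0,1], [3,2,1,0]]" by code_simp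

lemma g4_0: "\<forall>ss\<in>set (List.n_lists 4 [True,False]). goodc 4 [0,1,2,3] ss" by code_simp
lemma g4_1: "\<forall>ss\<in>set (List.n_lists 4 [True,False]). goodc 4 [0,1,3,2] ss" by code_simp
lemma g4_2: "\<forall>ss\<in>set (List.n_lists 4 [True,False]). goodc 4 [0,2,1,3] ss" by code_simp
lemma g4_3: "\<forall>ss\<in>set (List.n_lists 4 [True,False]). goodc 4 [0,2,3,1] ss" by code_simp
lemma g4_4: "\<forall>ss\<in>set (List.n_lists 4 [True,False]). goodc 4 [0,3,1,2] ss" by code_simp
lemma g4_5: "\<forall>ss\<in>set (List.n_lists 4 [True,False]). goodc 4 [0,3,2,1] ss" by code_simp
lemma g4_6: "\<forall>ss\<in>set (List.n_lists 4 [True,False]). goodc 4 [1,0,2,3] ss" by code_simp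
lemma g4_7: "\<forall>ss\<in>set (List.n_lists 4 [True,False]). goodc 4 [1,0,3,2] ss" by code_simp
lemma g4_8: "\<forall>ss\<in>set (List.n_lists 4 [True,False]). goodc 4 [1,2,0,3] ss" by code_simp
lemma g4_9: "\<forall>ss\<in>set (List.n_lists 4 [True,False]). goodc 4 [1,2,3,0] ss" by code_simp
lemma g4_10: "\<forall>ss\<in>set (List.n_lists 4 [True,False]). goodc 4 [1,3,0,2] ss" by code_simp
lemma g4_11: "\<forall>ss\<in>set (List.n_lists 4 [True,False]). goodc 4 [1,3,2,0] ss" by code_simp
lemma g4_12: "\<forall>ss\<in>set (List.n_lists 4 [True,False]). goodc 4 [2,0,1,3] ss" by code_simp
lemma g4_13: "\<forall>ss\<in>set (List.n_lists 4 [True,False]). goodc 4 [2,0,3,1] ss" by code_simp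
lemma g4_14: "\<forall>ss\<in>set (List.n_lists 4 [True,False]). goodc 4 [2,1,0,3] ss" by code_simp
lemma g4_15: "\<forall>ss\<in>set (List.n_lists 4 [True,False]). goodc 4 [2,1,3,0] ss" by code_simp
lemma g4_16: "\<forall>ss\<in>set (List.n_lists 4 [True,False]). goodc 4 [2,3,0,1] ss" by code_simp
lemma g4_17: "\<forall>ss\<in>set (List.n_lists 4 [True,False]). goodc 4 [2,3,1,0] ss" by code_simp
lemma g4_18: "\<forall>ss\<in>set (List.n_lists 4 [True,False]). goodc 4 [3,0,1,2] ss" by code_simp
lemma g4_19: "\<forall>ss\<in>set (List.n_lists 4 [True,False]). goodc 4 [3,0,2,1] ss" by code_simp
lemma g4_20: "\<forall>ss\<in>set (List.n_lists 4 [True,False]). goodc 4 [3,1,0,2] ss" by code_simp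
lemma g4_21: "\<forall>ss\<in>set (List.n_lists 4 [True,False]). goodc 4 [3,1,2,0] ss" by code_simp
lemma g4_22: "\<forall>ss\<in>set (List.n_lists 4 [True,False]). goodc 4 [3,2,0,1] ss" by code_simp
lemma g4_23: "\<forall>ss\<in>set (List.n_lists 4 [True,False]). goodc 4 [3,2,1,0] ss" by code_simp

lemma ag4: "allg 4"
  unfolding allg_def perms4 using g4_0 g4_1 g4_2 g4_3 g4_4 g4_5 g4_6 g4_7 g4_8 g4_9 g4_10 g4_11 g4_12 g4_13 g4_14 g4_15 g4_16 g4_17 g4_18 g4_19 g4_20 g4_21 g4_22 g4_23 by simp

lemma wit: "filling_pair 2 4 (\<lambda>j. [0,1,3,2] ! j) (\<lambda>v. [True,True,True,True] ! v)"
proof -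
  define pi0 :: "nat \<Rightarrow> nat" where "pi0 = (\<lambda>j. [0,1,3,2] ! j)"
  define sg0 :: "nat \<Rightarrow> bool" where "sg0 = (\<lambda>v. [True,True,True,True] ! v)"
  have bij: "bij_betw pi0 {0..<4} {0..<4}" unfolding pi0_def
    by (rule bij_betw_nth) (auto simp: atLeast0LessThan)
  have ps: "[0,1,3,2] = map pi0 [0..<4]" by (simp add: pi0_def upt_rec)
  have ss: "[True,True,True,True] = map sg0 [0..<4]" by (simp add: sg0_def upt_rec)
  have ok: "case collect (4*4) (fp_c 4 [0,1,3,2] [True,True,True,True]) (hes 4) [] of None \<Rightarrow> False | Some L \<Rightarrow>
     length L = 2 \<and> (\<forall>F\<in>set L. card (set F) \<noteq> 2)" by code_simp
  then obtain L where L: "collect (4*4) (fp_c 4 [0,1,3,2] [True,True,True,True]) (hes 4) [] = Some L"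
    "length L = 2" "\<forall>F\<in>set L. card (set F) \<noteq> 2" by (auto split: option.splits)
  note lf = link_faces2[OF bij ps ss L(1)]
  have "filling_pair 2 4 pi0 sg0"
    unfolding filling_pair_def using bij lf(1,2) L by auto
  then show ?thesis by (simp add: pi0_def sg0_def)
qed

theorem theorem1p1:
  fixes n :: nat and pi :: "nat \<Rightarrow> nat" and sg :: "nat \<Rightarrow> bool"
  assumes "minimal_filling_pair 2 n pi sg"
  shows "face_sizes n pi sg = {#4, 12#} \<or> face_sizes n pi sg = {#8, 8#}"
proof -
  have fp: "filling_pair 2 n pi sg" and mn: "\<And>m pi' sg'. filling_pair 2 m pi' sg' \<Longrightarrow> n \<le> m"
    using assms unfolding minimal_filling_pair_def by auto
  have n4: "n \<le> 4" using mn[OF wit] .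
  have n1: "1 \<le> n" and bij: "bij_betw pi {0..<n} {0..<n}"
    and eu: "int n - 2 * int n + int (card (faces n pi sg)) = 2 - 2 * int 2"
    and nb: "\<forall>F \<in> faces n pi sg. card F \<noteq> 2"
    using fp unfolding filling_pair_def by auto
  define ps where "ps = map pi [0..<n]"
  define ss where "ss = map sg [0..<n]"
  have "n = 1 \<or> n = 2 \<or> n = 3 \<or> n = 4" using n1 n4 by auto
  then have ag: "allg n" using ag1 ag2 ag3 ag4 by auto
  have "distinct ps" using bij by (simp add: ps_def bij_betw_def distinct_map)
  moreover have "set ps \<subseteq> set [0..<n]" using bij by (auto simp: ps_def bij_betw_def)
  ultimately have psin: "ps \<in> set (filter distinct (List.n_lists n [0..<n]))"
    by (simp add: set_n_lists ps_def)
  have ssin: "ss \<in> set (List.n_lists n [True,False])"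
    by (auto simp: set_n_lists ss_def)
  have "goodc n ps ss" using ag psin ssin unfolding allg_def by blast
  then obtain L where col: "collect (4*n) (fp_c n ps ss) (hes n) [] = Some L" and g2: "good2 n L"
    unfolding goodc_def by (auto split: option.splits)
  note lf = link_faces2[OF bij ps_def ss_def col]
  have dF: "\<And>F. F \<in> set L \<Longrightarrow> distinct F"
  proof -
    fix F assume "F \<in> set L"
    then have "\<exists>h\<in>set (hes n). \<exists>xs. orb (4*n) (fp_c n ps ss) h h = Some xs \<and> F = srt_c xs"
      using collect_spec[OF col] by auto
    then show "distinct F" by (metis set_srt_c(2))
  qed
  have "\<forall>F\<in>set L. length F \<noteq> 2"
  proof
    fix F assume F: "F \<in> set L"
    then have "set F \<in> faces n pi sg" using lf(1) by auto
    then have "card (set F) \<noteq> 2" using nb by auto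
    then show "length F \<noteq> 2" using distinct_card[OF dF[OF F]] by simp
  qed
  moreover have "int n - 2 * int n + int (length L) = -2" using eu lf(2) by simp
  ultimately have mem: "sort (map length L) = [4,12] \<or> sort (map length L) = [8,8]"
    using g2 unfolding good2_def by blast
  have fs: "face_sizes n pi sg = mset (sort (map length L))" using lf(3) by (simp only: mset_sort)
  from mem show ?thesis
  proof
    assume h: "sort (map length L) = [4,12]"
    have "face_sizes n pi sg = mset [4,12]" using fs h by (simp only:)
    then show ?thesis by simp
  next
    assume h: "sort (map length L) = [8,8]"
    have "face_sizes n pi sg = mset [8,8]" using fs h by (simp only:)
    then show ?thesis by simp
  qed
qed

end
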